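(* Let $V=\mathbb C^n$ with $n$ even and consider the rational map $\phi:\mathbb P(\Lambda^2V)\times\mathbb P(\Lambda^2V)\dashrightarrow\mathbb P(S^2V)$, $([A],[B])\mapsto[AJB-BJA]$. (a) If $n=2$, then $AJB-BJA=0$ for all $A,B\in\Lambda^2V$, so $\phi$ is nowhere defined. (b) If $n=4$, the image of $\phi$ in $\mathbb P^9=\mathbb P(S^2\mathbb C^4)$ is a Grassmannian $\mathbb G(2,5)$, i.e. a subvariety projectively equivalent to the Plücker embedding of the Grassmannian of $2$-planes in $\mathbb C^5$ in $\mathbb P(\Lambda^2\mathbb C^5)\cong\mathbb P^9$.
   Context: $\Lambda^2V$ and $S^2V$ denote skew-symmetric and symmetric $n\times n$ complex matrices, $n=2p$, and $J=\begin{bmatrix}0&I_p\\-I_p&0\end{bmatrix}$. *)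

theory Defs
  imports "HOL-Analysis.Analysis" "HOL-Library.Numeral_Type"
begin

text \<open>Index k (1 \<le> k \<le> n) of an n x n matrix, realised in the numeral type of size n.\<close>
definition ix :: "nat \<Rightarrow> 'n::{finite,semiring_1}" where
  "ix k = of_nat (k - 1)"

text \<open>The standard symplectic matrix J = [[0, I_p], [-I_p, 0]] of size n = 2p.\<close>
definition Jmat :: "nat \<Rightarrow> ((complex, 'n::{finite,semiring_1}) vec, 'n) vec" where
  "Jmat p = (\<chi> i j. if (\<exists>k\<in>{1..p}. i = ix k \<and> j = ix (k + p)) then 1
                   else if (\<exists>k\<in>{1..p}. i = ix (k + p) \<and> j = ix k) then -1 else 0)"

definition skew :: "complex^'n^'n \<Rightarrow> bool" where
  "skew A \<longleftrightarrow> transpose A = - A"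

definition symm :: "complex^'n^'n \<Rightarrow> bool" where
  "symm A \<longleftrightarrow> transpose A = A"

definition cscale :: "complex \<Rightarrow> complex^'n^'m \<Rightarrow> complex^'n^'m" where
  "cscale c M = (\<chi> i j. c * M $ i $ j)"

definition clin :: "(complex^'n^'m \<Rightarrow> complex^'p^'q) \<Rightarrow> bool" where
  "clin L \<longleftrightarrow> (\<forall>M N. L (M + N) = L M + L N) \<and> (\<forall>c M. L (cscale c M) = cscale c (L M))"

definition phi :: "nat \<Rightarrow> ((complex, 'n::{finite,semiring_1}) vec, 'n) vec \<Rightarrow> ((complex, 'n) vec, 'n) vec \<Rightarrow> ((complex, 'n) vec, 'n) vec" where
  "phi p A B = A ** Jmat p ** B - B ** Jmat p ** A"

text \<open>Decomposable bivectors u \<and> v in \<Lambda>^2 C^5, viewed as skew 5x5 matrices u v^T - v u^T: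
  the affine cone over the Pluecker-embedded Grassmannian G(2,5).\<close>
definition wedge :: "complex^'n \<Rightarrow> complex^'n \<Rightarrow> complex^'n^'n" where
  "wedge u v = (\<chi> i j. u $ i * v $ j - v $ i * u $ j)"

end

theory Submission
  imports Defs
begin

lemma ex4: fixes x :: 4 shows "x = 0 \<or> x = 1 \<or> x = 2 \<or> x = 3"
proof (induct x)
  case (of_int z)
  then have "z = 0 \<or> z = 1 \<or> z = 2 \<or> z = 3" by fastforce
  then show ?case by auto
qed

lemma ex5: fixes x :: 5 shows "x = 0 \<or> x = 1 \<or> x = 2 \<or> x = 3 \<or> x = 4"
proof (induct x)
  case (of_int z)
  then have "z = 0 \<or> z = 1 \<or> z = 2 \<or> z = 3 \<or> z = 4" by fastforce
  then show ?case by auto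
qed

lemma ex2: fixes x :: 2 shows "x = 0 \<or> x = 1"
proof (induct x)
  case (of_int z)
  then have "z = 0 \<or> z = 1" by fastforce
  then show ?case by auto
qed

lemma all4: "(\<forall>i::4. P i) \<longleftrightarrow> P 0 \<and> P 1 \<and> P 2 \<and> P 3" by (metis ex4)
lemma all5: "(\<forall>i::5. P i) \<longleftrightarrow> P 0 \<and> P 1 \<and> P 2 \<and> P 3 \<and> P 4" by (metis ex5)
lemma all2: "(\<forall>i::2. P i) \<longleftrightarrow> P 0 \<and> P 1" by (metis ex2)
lemma sum4: "sum f (UNIV::4 set) = f 0 + f 1 + f 2 + f 3"
proof -
  have u: "UNIV = {0,1,2,3::4}" using ex4 by auto
  show ?thesis unfolding u by (simp add: ac_simps)
qed
lemma sum2: "sum f (UNIV::2 set) = f 0 + f 1"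
proof -
  have u: "UNIV = {0,1::2}" using ex2 by auto
  show ?thesis unfolding u by (simp add: ac_simps)
qed

lemma Jmat2: "(Jmat 2 :: complex^4^4) = (\<chi> i j. if i=0\<and>j=2 \<or> i=1\<and>j=3 then 1 else if i=2\<and>j=0 \<or> i=3\<and>j=1 then -1 else 0)"
proof -
  have e: "{1..2::nat} = {1,2}" by auto
  show ?thesis unfolding Jmat_def ix_def e by (simp add: vec_eq_iff all4)
qed

lemma Jmat1: "(Jmat 1 :: complex^2^2) = (\<chi> i j. if i=0\<and>j=1 then 1 else if i=1\<and>j=0 then -1 else 0)"
  unfolding Jmat_def ix_def by (simp add: vec_eq_iff all2)

lemma skewE: "skew A \<Longrightarrow> A $ i $ j = - A $ j $ i"
proof -
  assume "skew A"
  then have "transpose A $ j $ i = (-A) $ j $ i" unfolding skew_def by simp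
  then show ?thesis by (simp add: transpose_def)
qed

lemma skew2: assumes "skew (A::complex^2^2)" shows "A$0$0 = 0" "A$1$1 = 0" "A$1$0 = - A$0$1"
  using skewE[OF assms, of 0 0] skewE[OF assms, of 1 1] skewE[OF assms, of 1 0] by auto

theorem partA: "skew (A::complex^2^2) \<Longrightarrow> skew B \<Longrightarrow> phi 1 A B = 0"
  by (simp add: phi_def Jmat1 vec_eq_iff all2 matrix_matrix_mult_def sum2 skew2 algebra_simps)

definition Lu :: "complex^4^4 \<Rightarrow> 5 \<Rightarrow> 5 \<Rightarrow> complex" where
 "Lu S i j = (if i=0 \<and> j=1 then \<i>*(S$0$2 + S$1$3)
  else if i=0 \<and> j=2 then (- S$0$0 + S$1$1 - S$2$2 + S$3$3)/2
  else if i=0 \<and> j=3 then \<i>*(- S$0$0 - S$1$1 + S$2$2 + S$3$3)/2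
  else if i=0 \<and> j=4 then S$0$1 + S$2$3
  else if i=1 \<and> j=2 then \<i>*(- S$0$0 + S$1$1 + S$2$2 - S$3$3)/2
  else if i=1 \<and> j=3 then (S$0$0 + S$1$1 + S$2$2 + S$3$3)/2
  else if i=1 \<and> j=4 then \<i>*(S$0$1 - S$2$3)
  else if i=2 \<and> j=3 then \<i>*(S$0$2 - S$1$3)
  else if i=2 \<and> j=4 then S$0$3 - S$1$2
  else if i=3 \<and> j=4 then \<i>*(S$0$3 + S$1$2)
  else 0)"

definition Lmap :: "complex^4^4 \<Rightarrow> complex^5^5" where
 "Lmap S = (\<chi> i j. Lu S i j - Lu S j i)"

definition Mu :: "complex^5^5 \<Rightarrow> 4 \<Rightarrow> 4 \<Rightarrow> complex" where
 "Mu K i j = (if i=0 \<and> j=0 then (K$1$3 + \<i>*K$0$3 + \<i>*K$1$2 - K$0$2)/4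
  else if i=1 \<and> j=1 then (K$1$3 + \<i>*K$0$3 - \<i>*K$1$2 + K$0$2)/4
  else if i=2 \<and> j=2 then (K$1$3 - \<i>*K$0$3 - \<i>*K$1$2 - K$0$2)/4
  else if i=3 \<and> j=3 then (K$1$3 - \<i>*K$0$3 + \<i>*K$1$2 + K$0$2)/4
  else if i=0 \<and> j=2 then - \<i>*(K$0$1 + K$2$3)/2
  else if i=1 \<and> j=3 then - \<i>*(K$0$1 - K$2$3)/2
  else if i=0 \<and> j=1 then (K$0$4 - \<i>*K$1$4)/2
  else if i=2 \<and> j=3 then (K$0$4 + \<i>*K$1$4)/2
  else if i=0 \<and> j=3 then (K$2$4 - \<i>*K$3$4)/2
  else if i=1 \<and> j=2 then (- \<i>*K$3$4 - K$2$4)/2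
  else 0)"

definition Mmap :: "complex^5^5 \<Rightarrow> complex^4^4" where
 "Mmap K = (\<chi> i j. Mu K i j + Mu K j i)"

definition Pv :: "complex^4^4 \<Rightarrow> complex^5" where
 "Pv A = (\<chi> k. if k=0 then A$0$1 + A$2$3 else if k=1 then \<i>*(A$0$1 - A$2$3)
   else if k=2 then A$0$3 + A$1$2 else if k=3 then \<i>*(A$0$3 - A$1$2) else A$0$2 - A$1$3)"

definition Qu :: "complex^5 \<Rightarrow> 4 \<Rightarrow> 4 \<Rightarrow> complex" where
 "Qu u i j = (if i=0 \<and> j=1 then (u$0 - \<i>*u$1)/2
   else if i=2 \<and> j=3 then (u$0 + \<i>*u$1)/2
   else if i=0 \<and> j=3 then (u$2 - \<i>*u$3)/2
   else if i=1 \<and> j=2 then (u$2 + \<i>*u$3)/2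
   else if i=0 \<and> j=2 then u$4/2
   else if i=1 \<and> j=3 then - u$4/2 else 0)"

definition Qm :: "complex^5 \<Rightarrow> complex^4^4" where
 "Qm u = (\<chi> i j. Qu u i j - Qu u j i)"

lemma skew4: assumes "skew (A::complex^4^4)" shows
 "A$0$0 = 0" "A$1$1 = 0" "A$2$2 = 0" "A$3$3 = 0"
 "A$1$0 = - A$0$1" "A$2$0 = - A$0$2" "A$3$0 = - A$0$3"
 "A$2$1 = - A$1$2" "A$3$1 = - A$1$3" "A$3$2 = - A$2$3"
  using skewE[OF assms, of 0 0] skewE[OF assms, of 1 1] skewE[OF assms, of 2 2] skewE[OF assms, of 3 3]
   skewE[OF assms, of 1 0] skewE[OF assms, of 2 0] skewE[OF assms, of 3 0]
   skewE[OF assms, of 2 1] skewE[OF assms, of 3 1] skewE[OF assms, of 3 2] by auto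

lemma skew5: assumes "skew (A::complex^5^5)" shows
 "A$0$0 = 0" "A$1$1 = 0" "A$2$2 = 0" "A$3$3 = 0" "A$4$4 = 0"
 "A$1$0 = - A$0$1" "A$2$0 = - A$0$2" "A$3$0 = - A$0$3" "A$4$0 = - A$0$4"
 "A$2$1 = - A$1$2" "A$3$1 = - A$1$3" "A$4$1 = - A$1$4" 
 "A$3$2 = - A$2$3" "A$4$2 = - A$2$4" "A$4$3 = - A$3$4"
  using skewE[OF assms, of 0 0] skewE[OF assms, of 1 1] skewE[OF assms, of 2 2] skewE[OF assms, of 3 3]
   skewE[OF assms, of 4 4]
   skewE[OF assms, of 1 0] skewE[OF assms, of 2 0] skewE[OF assms, of 3 0] skewE[OF assms, of 4 0]
   skewE[OF assms, of 2 1] skewE[OF assms, of 3 1] skewE[OF assms, of 4 1]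
   skewE[OF assms, of 3 2] skewE[OF assms, of 4 2] skewE[OF assms, of 4 3] by auto

lemma symm4: assumes "symm (A::complex^4^4)" shows
 "A$1$0 = A$0$1" "A$2$0 = A$0$2" "A$3$0 = A$0$3"
 "A$2$1 = A$1$2" "A$3$1 = A$1$3" "A$3$2 = A$2$3"
proof -
  have "\<And>i j. A $ i $ j = A $ j $ i"
  proof -
    fix i j
    have "transpose A $ j $ i = A $ j $ i" using assms unfolding symm_def by simp
    then show "A $ i $ j = A $ j $ i" by (simp add: transpose_def)
  qed
  then show "A$1$0 = A$0$1" "A$2$0 = A$0$2" "A$3$0 = A$0$3"
    "A$2$1 = A$1$2" "A$3$1 = A$1$3" "A$3$2 = A$2$3" by auto
qed

lemma Lmap_skew: "skew (Lmap S)"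
  unfolding skew_def Lmap_def by (simp add: vec_eq_iff transpose_def)

lemma Mmap_symm: "symm (Mmap K)"
  unfolding symm_def Mmap_def by (simp add: vec_eq_iff transpose_def add.commute)

lemma Qm_skew: "skew (Qm u)"
  unfolding skew_def Qm_def by (simp add: vec_eq_iff transpose_def)

lemma PQ: "Pv (Qm u) = u"
  by (simp add: Pv_def Qm_def Qu_def vec_eq_iff all5 field_simps)

lemma clinL: "clin Lmap"
  unfolding clin_def
  by (simp add: Lmap_def Lu_def cscale_def vec_eq_iff all5 field_simps)

lemma MLinv: "symm S \<Longrightarrow> Mmap (Lmap S) = S"
  by (simp add: Mmap_def Mu_def Lmap_def Lu_def vec_eq_iff all4 symm4 field_simps)

lemma LMinv: "skew K \<Longrightarrow> Lmap (Mmap K) = K"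
  by (simp add: Mmap_def Mu_def Lmap_def Lu_def vec_eq_iff all5 skew5 field_simps)

lemma Lphi: assumes "skew A" "skew B"
  shows "Lmap (phi 2 A B) = wedge (Pv A) (Pv B)"
  using assms
  by (simp add: phi_def Jmat2 Lmap_def Lu_def wedge_def Pv_def vec_eq_iff all5 matrix_matrix_mult_def sum4 skew4 field_simps)

theorem mainTheorem12:
  shows "(\<forall>A B :: complex^2^2. skew A \<longrightarrow> skew B \<longrightarrow> phi 1 A B = 0)
    \<and> (\<exists>L :: complex^4^4 \<Rightarrow> complex^5^5.
          clin L \<and> bij_betw L {M. symm M} {M. skew M} \<and>
          L ` {phi 2 A B | A B :: complex^4^4. skew A \<and> skew B}
            = {wedge u v | u v :: complex^5. True})"
proof (intro conjI allI impI)
  fix A B :: "complex^2^2"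
  assume "skew A" "skew B"
  then show "phi 1 A B = 0" by (rule partA)
next
  show "\<exists>L :: complex^4^4 \<Rightarrow> complex^5^5.
          clin L \<and> bij_betw L {M. symm M} {M. skew M} \<and>
          L ` {phi 2 A B | A B :: complex^4^4. skew A \<and> skew B}
            = {wedge u v | u v :: complex^5. True}"
  proof (intro exI conjI)
    show "clin Lmap" by (rule clinL)
    show "bij_betw Lmap {M. symm M} {M. skew M}"
      by (rule bij_betw_byWitness[where f'=Mmap]) (simp_all add: MLinv LMinv Lmap_skew Mmap_symm image_subset_iff)
    show "Lmap ` {phi 2 A B | A B :: complex^4^4. skew A \<and> skew B} = {wedge u v | u v :: complex^5. True}"
    proof
      show "Lmap ` {phi 2 A B | A B :: complex^4^4. skew A \<and> skew B} \<subseteq> {wedge u v | u v :: complex^5. True}"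
      proof
        fix x assume "x \<in> Lmap ` {phi 2 A B | A B :: complex^4^4. skew A \<and> skew B}"
        then obtain y where y: "x = Lmap y" "y \<in> {phi 2 A B | A B :: complex^4^4. skew A \<and> skew B}" by (rule imageE) simp
        then obtain A B where ab: "y = phi 2 A B" "skew A" "skew B" by blast
        have "x = Lmap (phi 2 A B)" using y(1) ab(1) by simp
        also have "\<dots> = wedge (Pv A) (Pv B)" by (rule Lphi[OF ab(2,3)])
        finally have "x = wedge (Pv A) (Pv B)" .
        then show "x \<in> {wedge u v | u v :: complex^5. True}" by blast
      qed
    next
      show "{wedge u v | u v :: complex^5. True} \<subseteq> Lmap ` {phi 2 A B | A B :: complex^4^4. skew A \<and> skew B}"
      proof
        fix x assume "x \<in> {wedge u v | u v :: complex^5. True}"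
        then obtain u v where x: "x = wedge u v" by blast
        have "Lmap (phi 2 (Qm u) (Qm v)) = wedge (Pv (Qm u)) (Pv (Qm v))" by (rule Lphi[OF Qm_skew Qm_skew])
        then have e: "Lmap (phi 2 (Qm u) (Qm v)) = x" unfolding PQ x .
        have m: "phi 2 (Qm u) (Qm v) \<in> {phi 2 A B | A B :: complex^4^4. skew A \<and> skew B}"
          by (rule CollectI, rule exI[of _ "Qm u"], rule exI[of _ "Qm v"]) (simp add: Qm_skew)
        show "x \<in> Lmap ` {phi 2 A B | A B :: complex^4^4. skew A \<and> skew B}"
          by (rule image_eqI[where f=Lmap, OF sym[OF e] m])
      qed
    qed
  qed
qed

end
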